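(* Let $G$ be a chordal graph, $X\subsetneq V(G)$ a clique, and $L_1,\dots,L_t$ the evaporation sequence of $G$ with exception set $X$. Let $C=V(G)\setminus X$. If $G\setminus X$ is connected, then $N(C)=N(L_t)\cap X$.
   Context: A vertex is simplicial if its neighborhood is a clique. For a chordal graph $G$ and a clique $X\subseteq V(G)$ (possibly empty), the evaporation sequence of $G$ with exception set $X$ is defined recursively: if $X=V(G)$ it is the empty sequence; otherwise let $L_1$ be the set of simplicial vertices of $G$ that are not in $X$ (this set is always nonempty), and the evaporation sequence is $L_1$ followed by the evaporation sequence of $G-L_1$ with exception set $X$. For $S\subseteq V(G)$, $N(S)$ denotes the set of vertices not in $S$ that are adjacent to some vertex of $S$. *)

theory Defs
  imports Main
begin

text \<open>A finite simple graph is given by a finite vertex set V and a symmetric,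
irreflexive adjacency relation E (only edges between vertices of V matter).\<close>

definition graph :: "'a set \<Rightarrow> ('a \<Rightarrow> 'a \<Rightarrow> bool) \<Rightarrow> bool" where
  "graph V E \<longleftrightarrow> finite V \<and> (\<forall>u v. E u v \<longrightarrow> E v u) \<and> (\<forall>v. \<not> E v v)"

definition clique :: "('a \<Rightarrow> 'a \<Rightarrow> bool) \<Rightarrow> 'a set \<Rightarrow> bool" where
  "clique E K \<longleftrightarrow> (\<forall>u\<in>K. \<forall>v\<in>K. u \<noteq> v \<longrightarrow> E u v)"

definition is_cycle :: "'a set \<Rightarrow> ('a \<Rightarrow> 'a \<Rightarrow> bool) \<Rightarrow> 'a list \<Rightarrow> bool" where
  "is_cycle V E cs \<longleftrightarrow> distinct cs \<and> set cs \<subseteq> V \<and> length cs \<ge> 3 \<and>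
     (\<forall>i < length cs. E (cs ! i) (cs ! ((i + 1) mod length cs)))"

definition has_chord :: "('a \<Rightarrow> 'a \<Rightarrow> bool) \<Rightarrow> 'a list \<Rightarrow> bool" where
  "has_chord E cs \<longleftrightarrow> (\<exists>i < length cs. \<exists>j < length cs.
     i \<noteq> j \<and> j \<noteq> (i + 1) mod length cs \<and> i \<noteq> (j + 1) mod length cs \<and> E (cs ! i) (cs ! j))"

definition chordal :: "'a set \<Rightarrow> ('a \<Rightarrow> 'a \<Rightarrow> bool) \<Rightarrow> bool" where
  "chordal V E \<longleftrightarrow> (\<forall>cs. is_cycle V E cs \<and> length cs \<ge> 4 \<longrightarrow> has_chord E cs)"

definition simplicial :: "'a set \<Rightarrow> ('a \<Rightarrow> 'a \<Rightarrow> bool) \<Rightarrow> 'a \<Rightarrow> bool" where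
  "simplicial V E v \<longleftrightarrow> v \<in> V \<and> clique E {u \<in> V. E v u}"

definition nbhd :: "'a set \<Rightarrow> ('a \<Rightarrow> 'a \<Rightarrow> bool) \<Rightarrow> 'a set \<Rightarrow> 'a set" where
  "nbhd V E S = {v \<in> V - S. \<exists>u\<in>S. E u v}"

definition connected_on :: "'a set \<Rightarrow> ('a \<Rightarrow> 'a \<Rightarrow> bool) \<Rightarrow> bool" where
  "connected_on W E \<longleftrightarrow> (\<forall>u\<in>W. \<forall>v\<in>W. (\<lambda>x y. x \<in> W \<and> y \<in> W \<and> E x y)\<^sup>*\<^sup>* u v)"

inductive evap :: "'a set \<Rightarrow> ('a \<Rightarrow> 'a \<Rightarrow> bool) \<Rightarrow> 'a set \<Rightarrow> 'a set list \<Rightarrow> bool" where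
  evap_Nil: "X = V \<Longrightarrow> evap V E X []"
| evap_Cons: "X \<noteq> V \<Longrightarrow> L = {v. simplicial V E v \<and> v \<notin> X} \<Longrightarrow> evap (V - L) E X Ls
              \<Longrightarrow> evap V E X (L # Ls)"

end

theory Submission
  imports Defs
begin

lemma nbr:
  assumes sym: "\<forall>u v. E u v \<longrightarrow> E v u"
    and simp: "\<forall>v\<in>L. clique E {u\<in>V. E v u}"
    and HV: "H \<subseteq> V" and LH: "L \<subseteq> H"
    and path: "(\<lambda>x y. x\<in>H \<and> y\<in>H \<and> E x y)\<^sup>*\<^sup>* a w" and w: "w \<in> H - L"
  shows "a \<in> L \<longrightarrow> (\<exists>c\<in>H-L. E a c)"
  using path
proof (induction rule: converse_rtranclp_induct)
  case base
  then show ?case using w by auto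
next
  case (step y z)
  show ?case
  proof
    assume y: "y \<in> L"
    show "\<exists>c\<in>H-L. E y c"
    proof (cases "z \<in> L")
      case False
      then show ?thesis using step(1) by auto
    next
      case True
      then obtain c where c: "c \<in> H-L" "E z c" using step(3) by auto
      have "clique E {u\<in>V. E z u}" using simp True by auto
      moreover have "y \<in> {u\<in>V. E z u}" using step(1) sym HV by auto
      moreover have "c \<in> {u\<in>V. E z u}" using c HV by auto
      moreover have "y \<noteq> c" using y c by auto
      ultimately have "E y c" unfolding clique_def by blast
      then show ?thesis using c by auto
    qed
  qed
qed

lemma conn:
  assumes sym: "\<forall>u v. E u v \<longrightarrow> E v u"
    and simp: "\<forall>v\<in>L. clique E {u\<in>V. E v u}"
    and HV: "H \<subseteq> V" and LH: "L \<subseteq> H"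
    and path: "(\<lambda>x y. x\<in>H \<and> y\<in>H \<and> E x y)\<^sup>*\<^sup>* a w" and w: "w \<in> H - L"
  shows "(a \<in> H - L \<longrightarrow> (\<lambda>x y. x\<in>H-L \<and> y\<in>H-L \<and> E x y)\<^sup>*\<^sup>* a w) \<and>
         (a \<in> L \<longrightarrow> (\<forall>c\<in>H-L. E a c \<longrightarrow> (\<lambda>x y. x\<in>H-L \<and> y\<in>H-L \<and> E x y)\<^sup>*\<^sup>* c w))"
  using path
proof (induction rule: converse_rtranclp_induct)
  case base
  then show ?case using w by auto
next
  case (step y z)
  let ?R = "\<lambda>x y. x\<in>H-L \<and> y\<in>H-L \<and> E x y"
  have yz: "y \<in> H" "z \<in> H" "E y z" using step(1) by auto
  show ?case
  proof (intro conjI impI ballI)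
    assume y: "y \<in> H - L"
    show "?R\<^sup>*\<^sup>* y w"
    proof (cases "z \<in> L")
      case False
      then have r: "?R y z" using y yz by auto
      have "z \<in> H - L" using False yz by simp
      then have "?R\<^sup>*\<^sup>* z w" using step(3) by simp
      with r show ?thesis by (rule converse_rtranclp_into_rtranclp)
    next
      case True
      have "E z y" using sym yz(3) by blast
      moreover have "y \<in> H - L" using y .
      ultimately show ?thesis using step(3) True by simp
    qed
  next
    fix c assume y: "y \<in> L" and c: "c \<in> H - L" and yc: "E y c"
    have cl: "clique E {u\<in>V. E y u}" using simp y by auto
    show "?R\<^sup>*\<^sup>* c w"
    proof (cases "z \<in> L")
      case False
      then have "z \<in> H - L" using yz by simp
      then have zr: "?R\<^sup>*\<^sup>* z w" using step(3) by simp
      show ?thesis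
      proof (cases "c = z")
        case True then show ?thesis using zr by simp
      next
        case False
        moreover have "c \<in> {u\<in>V. E y u}" using c yc HV by auto
      moreover have "z \<in> {u\<in>V. E y u}" using yz HV by auto
      ultimately have "E c z" using cl unfolding clique_def by blast
        then have "?R c z" using c yz \<open>z \<notin> L\<close> by auto
        then show ?thesis using zr by (rule converse_rtranclp_into_rtranclp)
      qed
    next
      case True
      have "z \<noteq> c" using True c by auto
      moreover have "c \<in> {u\<in>V. E y u}" using c yc HV by auto
      moreover have "z \<in> {u\<in>V. E y u}" using yz HV by auto
      ultimately have "E z c" using cl unfolding clique_def by blast
      then show ?thesis using step(3) True c by simp
    qed
  qed
qed

lemma last_sub: "evap V E X Ls \<Longrightarrow> Ls \<noteq> [] \<Longrightarrow> last Ls \<subseteq> V - X"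
proof (induction rule: evap.induct)
  case (evap_Nil X V E)
  then show ?case by simp
next
  case (evap_Cons X V L E Ls)
  show ?case
  proof (cases "Ls = []")
    case True
    then show ?thesis using evap_Cons(2) by (auto simp: simplicial_def)
  next
    case False
    then show ?thesis using evap_Cons by auto
  qed
qed

lemma evap_ne: "evap V E X Ls \<Longrightarrow> Ls = [] \<Longrightarrow> X = V"
  by (induction rule: evap.induct) auto

lemma main:
  "evap V E X Ls \<Longrightarrow> \<forall>u v. E u v \<longrightarrow> E v u \<Longrightarrow> X \<subseteq> V \<Longrightarrow> connected_on (V - X) E \<Longrightarrow>
   x \<in> X \<Longrightarrow> v \<in> V - X \<Longrightarrow> E v x \<Longrightarrow> \<exists>w\<in>last Ls. E w x"
proof (induction arbitrary: v rule: evap.induct)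
  case (evap_Nil X V E)
  then show ?case by simp
next
  case (evap_Cons X V L E Ls)
  note sym = evap_Cons(5)
  show ?case
  proof (cases "Ls = []")
    case True
    then have "V - L = X" using evap_Cons(3) evap_ne by blast
    then show ?thesis using True evap_Cons by auto
  next
    case False
    then have ne: "V - L \<noteq> X" using evap_Cons(3) evap_ne evap.cases
      by (metis evap.simps list.distinct(1))
    have XL: "X \<subseteq> V - L" using evap_Cons(2,6) by auto
    have simp: "\<forall>v\<in>L. clique E {u\<in>V. E v u}" using evap_Cons(2) by (auto simp: simplicial_def)
    have LH: "L \<subseteq> V - X" using evap_Cons(2) by (auto simp: simplicial_def)
    obtain w0 where w0: "w0 \<in> (V - X) - L" using ne XL by blast
    have conn': "connected_on (V - L - X) E"
      unfolding connected_on_def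
    proof (intro ballI)
      fix a b assume a: "a \<in> V - L - X" and b: "b \<in> V - L - X"
      have "(\<lambda>x y. x\<in>V-X \<and> y\<in>V-X \<and> E x y)\<^sup>*\<^sup>* a b"
        using evap_Cons(7) a b unfolding connected_on_def by auto
      from conn[OF sym simp _ LH this] a b
      have "(\<lambda>x y. x\<in>V-X-L \<and> y\<in>V-X-L \<and> E x y)\<^sup>*\<^sup>* a b" by auto
      moreover have "V-X-L = V-L-X" by auto
      ultimately show "(\<lambda>x y. x\<in>V-L-X \<and> y\<in>V-L-X \<and> E x y)\<^sup>*\<^sup>* a b" by simp
    qed
    have lst: "last (L # Ls) = last Ls" using False by simp
    show ?thesis
    proof (cases "v \<in> L")
      case False
      then show ?thesis using evap_Cons.IH[OF sym XL conn' evap_Cons(8)] evap_Cons(9,10) lst by auto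
    next
      case True
      have "(\<lambda>x y. x\<in>V-X \<and> y\<in>V-X \<and> E x y)\<^sup>*\<^sup>* v w0"
        using evap_Cons(7) evap_Cons(9) w0 unfolding connected_on_def by auto
      from nbr[OF sym simp _ LH this] w0 True
      obtain c where c: "c \<in> V - X - L" "E v c" by auto
      have "clique E {u\<in>V. E v u}" using simp True by auto
      moreover have "x \<noteq> c" using c evap_Cons(8) by auto
      moreover have "c \<in> {u\<in>V. E v u}" using c by auto
      moreover have "x \<in> {u\<in>V. E v u}" using evap_Cons(6,8,10) by auto
      ultimately have "E c x" unfolding clique_def by (metis (no_types, lifting))
      then show ?thesis using evap_Cons.IH[OF sym XL conn' evap_Cons(8), of c] c lst by auto
    qed
  qed
qed

theorem lemma5p8:
  fixes V X :: "'a set" and E :: "'a \<Rightarrow> 'a \<Rightarrow> bool" and Ls :: "'a set list"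
  assumes "graph V E" and "chordal V E"
    and "X \<subset> V" and "clique E X"
    and "evap V E X Ls"
    and "connected_on (V - X) E"
  shows "nbhd V E (V - X) = nbhd V E (last Ls) \<inter> X"
proof -
  have sym: "\<forall>u v. E u v \<longrightarrow> E v u" using assms(1) by (simp add: graph_def)
  have ne: "Ls \<noteq> []" using evap_ne assms(3,5) by blast
  have ls: "last Ls \<subseteq> V - X" using last_sub[OF assms(5) ne] .
  show ?thesis
  proof
    show "nbhd V E (V - X) \<subseteq> nbhd V E (last Ls) \<inter> X"
    proof
      fix y assume "y \<in> nbhd V E (V - X)"
      then obtain u where y: "y \<in> V" "y \<in> X" "u \<in> V - X" "E u y" by (auto simp: nbhd_def)
      then obtain w where "w \<in> last Ls" "E w y"
        using main[OF assms(5) sym _ assms(6)] assms(3) by blast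
      then show "y \<in> nbhd V E (last Ls) \<inter> X" using y ls by (auto simp: nbhd_def)
    qed
  next
    show "nbhd V E (last Ls) \<inter> X \<subseteq> nbhd V E (V - X)"
      using ls by (auto simp: nbhd_def)
  qed
qed

end
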